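(* Let $S$ be a compact Riemann surface with an action of a finite group $G$ of geometric signature $(\gamma;[m_1,C_1],\ldots,[m_t,C_t])$, with branch values $q_1,\dots,q_t$ of $\pi_G$ ($q_j$ of type $C_j$), and let $H\le G$. For each $j$ fix a representative $G_j\in C_j$ and a left transversal $\Omega_{G_j}$ of $N_G(G_j)$ in $G$, and partition $\Omega_{G_j}$ into the nonempty classes $L^j_1,\ldots,L^j_{\nu_j}$ of the equivalence relation $l\sim l'\iff |lG_jl^{-1}\cap H|=|l'G_jl'^{-1}\cap H|$; choose $l_k\in L^j_k$. Set $$c^j_k:=|L^j_k|\cdot\frac{[N_G(G_j):G_j]\cdot|l_kG_jl_k^{-1}\cap H|}{|H|}.$$ Then, for each $j$ and $k$, exactly $c^j_k$ of the points of $S/H$ lying over $q_j$ (under the induced map $S/H\to S/G$) are marked with the number $|l_kG_jl_k^{-1}\cap H|$, i.e. their preimages in $S$ have stabilizer in $H$ of that order.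
   Context: $G$ acts faithfully by conformal automorphisms on $S$, with quotient map $\pi_G:S\to S/G$; $\pi_H:S\to S/H$ is the quotient by $H$. For a branch value $q$ of $\pi_G$, the stabilizers in $G$ of the points in $\pi_G^{-1}(q)$ form a complete conjugacy class $C$ of nontrivial cyclic subgroups of $G$, and $q$ is said to be of type $C$. If $q_1,\ldots,q_t$ are all the branch values of $\pi_G$, the geometric signature is $(\gamma;[m_1,C_1],\ldots,[m_t,C_t])$, with $\gamma$ the genus of $S/G$, $C_j$ the type of $q_j$, $m_j$ the order of the subgroups in $C_j$. A point of $S/H$ lying over a branch value of $\pi_G$ is a marked point of $S/H$, marked with the order of the stabilizer in $H$ of any of its preimages in $S$ (possibly $1$). *)

theory Defs
  imports "HOL-Algebra.Group_Action" "HOL-Algebra.Generated_Groups" Complex_Main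
begin

definition left_transversal :: "('a, 'b) monoid_scheme \<Rightarrow> 'a set \<Rightarrow> 'a set \<Rightarrow> bool" where
  "left_transversal G N \<Omega> \<longleftrightarrow> \<Omega> \<subseteq> carrier G \<and>
     (\<forall>g \<in> carrier G. \<exists>!l. l \<in> \<Omega> \<and> g \<in> l <#\<^bsub>G\<^esub> N)"

definition conj_sub :: "('a, 'b) monoid_scheme \<Rightarrow> 'a \<Rightarrow> 'a set \<Rightarrow> 'a set" where
  "conj_sub G l K = l <#\<^bsub>G\<^esub> K #>\<^bsub>G\<^esub> inv\<^bsub>G\<^esub> l"

text \<open>The points of S/H lying over the branch value q (whose fibre under pi_G is
  the G-orbit F): the H-orbits of points of F.\<close>
definition points_over :: "('a, 'c) monoid_scheme \<Rightarrow> 'a set \<Rightarrow> ('a \<Rightarrow> 'b \<Rightarrow> 'b) \<Rightarrow> 'b set \<Rightarrow> 'b set set" where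
  "points_over G H \<phi> F = {orbit (G\<lparr>carrier := H\<rparr>) \<phi> y | y. y \<in> F}"

definition marked_with :: "('a, 'c) monoid_scheme \<Rightarrow> 'a set \<Rightarrow> ('a \<Rightarrow> 'b \<Rightarrow> 'b) \<Rightarrow> 'b set \<Rightarrow> nat \<Rightarrow> bool" where
  "marked_with G H \<phi> P d \<longleftrightarrow> (\<exists>y \<in> P. card (stabilizer (G\<lparr>carrier := H\<rparr>) \<phi> y) = d)"

end

theory Submission
  imports Defs
begin

context group_action
begin

lemma grp: "group G" using group_hom group_hom.axioms(1) by auto

lemma conj_sub_img:
  assumes "g \<in> carrier G" "K \<subseteq> carrier G"
  shows "conj_sub G g K = (\<lambda>k. g \<otimes> k \<otimes> inv g) ` K"
  unfolding conj_sub_def l_coset_def r_coset_def by auto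

lemma stab_conj:
  assumes x0: "x0 \<in> E" and g: "g \<in> carrier G"
  shows "stabilizer G \<phi> (\<phi> g x0) = conj_sub G g (stabilizer G \<phi> x0)"
proof -
  interpret group G by (rule grp)
  have sub: "stabilizer G \<phi> x0 \<subseteq> carrier G" by (rule stabilizer_subset)
  have gx: "\<phi> g x0 \<in> E" using element_image x0 g by blast
  show ?thesis unfolding conj_sub_img[OF g sub]
  proof (intro equalityI subsetI)
    fix h assume h: "h \<in> stabilizer G \<phi> (\<phi> g x0)"
    hence hc: "h \<in> carrier G" and hf: "\<phi> h (\<phi> g x0) = \<phi> g x0" unfolding stabilizer_def by auto
    define k where "k = inv g \<otimes> h \<otimes> g"
    have kc: "k \<in> carrier G" unfolding k_def using hc g by auto
    have "\<phi> k x0 = \<phi> (inv g) (\<phi> h (\<phi> g x0))"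
      unfolding k_def using composition_rule x0 g hc gx
      by (metis inv_closed m_closed element_image)
    also have "\<dots> = x0" using hf orbit_sym_aux[OF g x0] by simp
    finally have "k \<in> stabilizer G \<phi> x0" unfolding stabilizer_def using kc by auto
    moreover have "h = g \<otimes> k \<otimes> inv g" unfolding k_def using hc g
      by (simp add: m_assoc) (metis m_assoc inv_closed r_inv l_one)
    ultimately show "h \<in> (\<lambda>k. g \<otimes> k \<otimes> inv g) ` stabilizer G \<phi> x0" by blast
  next
    fix h assume "h \<in> (\<lambda>k. g \<otimes> k \<otimes> inv g) ` stabilizer G \<phi> x0"
    then obtain k where k: "k \<in> stabilizer G \<phi> x0" and hk: "h = g \<otimes> k \<otimes> inv g" by blast
    have kc: "k \<in> carrier G" and kf: "\<phi> k x0 = x0" using k unfolding stabilizer_def by auto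
    have hc: "h \<in> carrier G" using hk kc g by auto
    have "h \<otimes> g = g \<otimes> k" using hk kc g by (simp add: m_assoc)
    hence "\<phi> h (\<phi> g x0) = \<phi> g (\<phi> k x0)"
      using composition_rule x0 g hc kc by metis
    thus "h \<in> stabilizer G \<phi> (\<phi> g x0)" using kf hc unfolding stabilizer_def by auto
  qed
qed

lemma norm_conj:
  assumes K: "K \<subseteq> carrier G" and l: "l \<in> carrier G" and n: "n \<in> normalizer G K"
  shows "conj_sub G (l \<otimes> n) K = conj_sub G l K"
proof -
  interpret group G by (rule grp)
  have nc: "n \<in> carrier G" and nK: "n <# K #> inv n = K"
    using n K unfolding normalizer_def stabilizer_def by auto
  have nK': "(\<lambda>k. n \<otimes> k \<otimes> inv n) ` K = K" using nK conj_sub_img[OF nc K]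
    unfolding conj_sub_def by simp
  have "conj_sub G (l \<otimes> n) K = (\<lambda>x. l \<otimes> x \<otimes> inv l) ` ((\<lambda>k. n \<otimes> k \<otimes> inv n) ` K)"
    unfolding conj_sub_img[OF m_closed[OF l nc] K] image_image
  proof (rule image_cong[OF refl])
    fix k assume "k \<in> K" hence kc: "k \<in> carrier G" using K by auto
    show "l \<otimes> n \<otimes> k \<otimes> inv (l \<otimes> n) = l \<otimes> (n \<otimes> k \<otimes> inv n) \<otimes> inv l"
      using kc l nc by (simp add: inv_mult_group m_assoc)
  qed
  thus ?thesis using nK' conj_sub_img[OF l K] by simp
qed

lemma main:
  assumes fin: "finite (carrier G)"
    and H: "subgroup H G"
    and x0: "x0 \<in> E"
    and Gj: "Gj = stabilizer G \<phi> x0"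
    and Om: "left_transversal G (normalizer G Gj) \<Omega>"
    and lk: "lk \<in> \<Omega>"
  shows "real (card {P \<in> points_over G H \<phi> (orbit G \<phi> x0).
                 marked_with G H \<phi> P (card (conj_sub G lk Gj \<inter> H))})
       = real (card {l \<in> \<Omega>. card (conj_sub G l Gj \<inter> H) = card (conj_sub G lk Gj \<inter> H)})
         * (real (card (normalizer G Gj)) / real (card Gj))
         * real (card (conj_sub G lk Gj \<inter> H)) / real (card H)"
proof -
  interpret group G by (rule grp)
  interpret AH: group_action "G\<lparr>carrier := H\<rparr>" E \<phi> by (rule induced_action[OF H])
  let ?HH = "G\<lparr>carrier := H\<rparr>"
  define d where "d = card (conj_sub G lk Gj \<inter> H)"
  define F where "F = orbit G \<phi> x0"
  define Q where "Q = {P \<in> points_over G H \<phi> F. marked_with G H \<phi> P d}"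
  define T where "T = {l \<in> \<Omega>. card (conj_sub G l Gj \<inter> H) = d}"
  define N where "N = normalizer G Gj"
  define A where "A = {g \<in> carrier G. card (conj_sub G g Gj \<inter> H) = d}"
  define Y where "Y = {y \<in> F. card (stabilizer ?HH \<phi> y) = d}"
  have Hc: "H \<subseteq> carrier G" using H subgroup.subset by blast
  have finH: "finite H" using Hc fin finite_subset by blast
  have cardH: "card H > 0" using finH subgroup.one_closed[OF H] card_gt_0_iff by blast
  have Gjc: "Gj \<subseteq> carrier G" using Gj stabilizer_subset by simp
  have finGj: "finite Gj" using Gjc fin finite_subset by blast
  have cardGj: "card Gj > 0" using finGj Gj stabilizer_one_closed[OF x0] card_gt_0_iff by blast
  have Nc: "N \<subseteq> carrier G" unfolding N_def using normalizer_imp_subgroup[OF Gjc] subgroup.subset by blast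
  have finN: "finite N" using Nc fin finite_subset by blast
  have Omc: "\<Omega> \<subseteq> carrier G" and Omu: "\<And>g. g \<in> carrier G \<Longrightarrow> \<exists>!l. l \<in> \<Omega> \<and> g \<in> l <# N"
    using Om unfolding left_transversal_def N_def by auto
  have lcos: "\<And>l. l <# N = (\<lambda>n. l \<otimes> n) ` N" unfolding l_coset_def by auto
  have Fchar: "F = (\<lambda>g. \<phi> g x0) ` carrier G" unfolding F_def orbit_def by auto
  have finF: "finite F" using Fchar fin by simp
  have FE: "F \<subseteq> E" using Fchar element_image x0 by blast
  have stabH: "\<And>y. stabilizer ?HH \<phi> y = stabilizer G \<phi> y \<inter> H"
    unfolding stabilizer_def using Hc by auto
  have stabg: "\<And>g. g \<in> carrier G \<Longrightarrow> stabilizer ?HH \<phi> (\<phi> g x0) = conj_sub G g Gj \<inter> H"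
    using stabH stab_conj[OF x0] Gj by simp
  have orbH: "\<And>y. orbit ?HH \<phi> y = (\<lambda>h. \<phi> h y) ` H" unfolding orbit_def by auto
  have s1: "card A = card N * card T"
  proof -
    have AU: "A = (\<Union>l\<in>T. l <# N)"
    proof (intro equalityI subsetI)
      fix g assume g: "g \<in> A"
      hence gc: "g \<in> carrier G" unfolding A_def by auto
      obtain l where l: "l \<in> \<Omega>" "g \<in> l <# N" using Omu[OF gc] by blast
      then obtain n where n: "n \<in> N" "g = l \<otimes> n" using lcos by blast
      have "conj_sub G g Gj = conj_sub G l Gj" using norm_conj[OF Gjc _ n(1)[unfolded N_def]] n l Omc by auto
      hence "l \<in> T" using g l unfolding A_def T_def by auto
      thus "g \<in> (\<Union>l\<in>T. l <# N)" using l by blast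
    next
      fix g assume "g \<in> (\<Union>l\<in>T. l <# N)"
      then obtain l n where l: "l \<in> T" and n: "n \<in> N" and gn: "g = l \<otimes> n" using lcos by blast
      have lc: "l \<in> carrier G" using l Omc unfolding T_def by auto
      have "conj_sub G g Gj = conj_sub G l Gj" using norm_conj[OF Gjc lc n[unfolded N_def]] gn by auto
      thus "g \<in> A" using l lc n Nc gn unfolding A_def T_def by auto
    qed
    have finT: "finite T" unfolding T_def using Omc fin finite_subset by (metis (no_types, lifting) mem_Collect_eq subsetI)
    have "card A = (\<Sum>l\<in>T. card (l <# N))"
      unfolding AU
    proof (rule card_UN_disjoint[OF finT])
      show "\<forall>i\<in>T. finite (i <# N)" using lcos finN by simp
      show "\<forall>i\<in>T. \<forall>j\<in>T. i \<noteq> j \<longrightarrow> (i <# N) \<inter> (j <# N) = {}"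
      proof (intro ballI impI)
        fix i j assume ij: "i \<in> T" "j \<in> T" "i \<noteq> j"
        show "(i <# N) \<inter> (j <# N) = {}"
        proof (rule ccontr)
          assume "(i <# N) \<inter> (j <# N) \<noteq> {}"
          then obtain g where g: "g \<in> i <# N" "g \<in> j <# N" by blast
          have "i \<in> carrier G" using ij Omc unfolding T_def by auto
          hence gc: "g \<in> carrier G" using g(1) lcos Nc by auto
          show False using Omu[OF gc] g ij unfolding T_def by auto
        qed
      qed
    qed
    also have "\<dots> = (\<Sum>l\<in>T. card N)"
    proof (rule sum.cong[OF refl])
      fix l assume "l \<in> T" hence lc: "l \<in> carrier G" using Omc unfolding T_def by auto
      have "inj_on (\<lambda>n. l \<otimes> n) N" using lc Nc by (auto simp: inj_on_def) (metis Units_eq Units_l_cancel subsetD)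
      thus "card (l <# N) = card N" unfolding lcos by (simp add: card_image)
    qed
    finally show ?thesis by simp
  qed
  have s2: "card A = card Y * card Gj"
  proof -
    define fib where "fib y = {g \<in> carrier G. \<phi> g x0 = y}" for y
    have AU: "A = (\<Union>y\<in>Y. fib y)"
    proof (intro equalityI subsetI)
      fix g assume g: "g \<in> A"
      hence gc: "g \<in> carrier G" unfolding A_def by auto
      have "\<phi> g x0 \<in> Y" using g gc stabg[OF gc] Fchar unfolding A_def Y_def by auto
      thus "g \<in> (\<Union>y\<in>Y. fib y)" using gc unfolding fib_def by auto
    next
      fix g assume "g \<in> (\<Union>y\<in>Y. fib y)"
      then obtain y where y: "y \<in> Y" and gc: "g \<in> carrier G" and gy: "\<phi> g x0 = y" unfolding fib_def by auto
      thus "g \<in> A" using stabg[OF gc] unfolding A_def Y_def by auto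
    qed
    have finY: "finite Y" unfolding Y_def using finF by simp
    have "card A = (\<Sum>y\<in>Y. card (fib y))"
      unfolding AU
    proof (rule card_UN_disjoint[OF finY])
      show "\<forall>i\<in>Y. finite (fib i)" unfolding fib_def using fin by simp
      show "\<forall>i\<in>Y. \<forall>j\<in>Y. i \<noteq> j \<longrightarrow> fib i \<inter> fib j = {}" unfolding fib_def by auto
    qed
    also have "\<dots> = (\<Sum>y\<in>Y. card Gj)"
    proof (rule sum.cong[OF refl])
      fix y assume "y \<in> Y"
      then obtain g0 where g0: "g0 \<in> carrier G" "y = \<phi> g0 x0" unfolding Y_def Fchar by auto
      have g0x: "\<phi> g0 x0 \<in> E" using element_image g0 x0 by blast
      have "fib y = (\<lambda>k. g0 \<otimes> k) ` Gj"
      proof (intro equalityI subsetI)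
        fix g assume "g \<in> fib y"
        hence gc: "g \<in> carrier G" and gy: "\<phi> g x0 = \<phi> g0 x0" unfolding fib_def g0 by auto
        define k where "k = inv g0 \<otimes> g"
        have kc: "k \<in> carrier G" unfolding k_def using gc g0 by auto
        have "\<phi> k x0 = \<phi> (inv g0) (\<phi> g x0)" unfolding k_def using composition_rule x0 g0 gc by auto
        also have "\<dots> = x0" using gy orbit_sym_aux[OF g0(1) x0] by simp
        finally have "k \<in> Gj" using Gj kc unfolding stabilizer_def by auto
        moreover have "g = g0 \<otimes> k" unfolding k_def using gc g0
          by (metis m_assoc inv_closed r_inv l_one)
        ultimately show "g \<in> (\<lambda>k. g0 \<otimes> k) ` Gj" by blast
      next
        fix g assume "g \<in> (\<lambda>k. g0 \<otimes> k) ` Gj"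
        then obtain k where k: "k \<in> Gj" "g = g0 \<otimes> k" by blast
        have kc: "k \<in> carrier G" and kf: "\<phi> k x0 = x0" using k Gj unfolding stabilizer_def by auto
        have "\<phi> g x0 = \<phi> g0 (\<phi> k x0)" using k composition_rule x0 g0 kc by auto
        thus "g \<in> fib y" using kf k g0 kc unfolding fib_def by auto
      qed
      moreover have "inj_on (\<lambda>k. g0 \<otimes> k) Gj" using g0 Gjc by (auto simp: inj_on_def) (metis Units_eq Units_l_cancel subsetD)
      ultimately show "card (fib y) = card Gj" by (simp add: card_image)
    qed
    finally show ?thesis by simp
  qed
  have s3: "card Y * d = card Q * card H"
  proof -
    have orbsame: "\<And>y z. y \<in> E \<Longrightarrow> z \<in> orbit ?HH \<phi> y \<Longrightarrow> orbit ?HH \<phi> z = orbit ?HH \<phi> y"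
    proof -
      fix y z assume y: "y \<in> E" and z: "z \<in> orbit ?HH \<phi> y"
      have zE: "z \<in> E" using z y AH.element_image unfolding orbit_def by blast
      have yz: "y \<in> orbit ?HH \<phi> z" using AH.orbit_sym[OF y zE z] .
      show "orbit ?HH \<phi> z = orbit ?HH \<phi> y"
      proof (intro equalityI subsetI)
        fix w assume w: "w \<in> orbit ?HH \<phi> z"
        have wE: "w \<in> E" using w zE AH.element_image unfolding orbit_def by blast
        show "w \<in> orbit ?HH \<phi> y" using AH.orbit_trans[OF y zE wE z w] .
      next
        fix w assume w: "w \<in> orbit ?HH \<phi> y"
        have wE: "w \<in> E" using w y AH.element_image unfolding orbit_def by blast
        show "w \<in> orbit ?HH \<phi> z" using AH.orbit_trans[OF zE y wE yz w] .
      qed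
    qed
    have os: "\<And>z. z \<in> E \<Longrightarrow> card (orbit ?HH \<phi> z) * card (stabilizer ?HH \<phi> z) = card H"
      using AH.orbit_stabilizer_theorem by (simp add: order_def)
    have orbpos: "\<And>z. z \<in> E \<Longrightarrow> card (orbit ?HH \<phi> z) > 0"
      using AH.orbit_refl orbH finH by (metis card_gt_0_iff empty_iff finite_imageI)
    have key: "\<And>y z. y \<in> E \<Longrightarrow> z \<in> orbit ?HH \<phi> y \<Longrightarrow>
        (card (stabilizer ?HH \<phi> z) = d) = (card (orbit ?HH \<phi> y) * d = card H)"
    proof -
      fix y z assume y: "y \<in> E" and z: "z \<in> orbit ?HH \<phi> y"
      have zE: "z \<in> E" using z y AH.element_image unfolding orbit_def by blast
      have e: "card (orbit ?HH \<phi> y) * card (stabilizer ?HH \<phi> z) = card H"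
        using os[OF zE] orbsame[OF y z] by simp
      have p: "card (orbit ?HH \<phi> y) > 0" using orbpos[OF y] .
      show "(card (stabilizer ?HH \<phi> z) = d) = (card (orbit ?HH \<phi> y) * d = card H)"
        using e p by (metis mult_left_cancel neq0_conv)
    qed
    have pts: "points_over G H \<phi> F = (\<lambda>y. orbit ?HH \<phi> y) ` F" unfolding points_over_def by auto
    have YU: "Y = \<Union>Q"
    proof (intro equalityI subsetI)
      fix y assume y: "y \<in> Y"
      hence yF: "y \<in> F" unfolding Y_def by auto
      have yE: "y \<in> E" using yF FE by auto
      have "orbit ?HH \<phi> y \<in> Q" unfolding Q_def pts marked_with_def
        using yF y AH.orbit_refl[OF yE] unfolding Y_def by auto
      thus "y \<in> \<Union>Q" using AH.orbit_refl[OF yE] by blast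
    next
      fix z assume "z \<in> \<Union>Q"
      then obtain y where yF: "y \<in> F" and z: "z \<in> orbit ?HH \<phi> y" and
        mk: "\<exists>w \<in> orbit ?HH \<phi> y. card (stabilizer ?HH \<phi> w) = d"
        unfolding Q_def pts marked_with_def by auto
      have yE: "y \<in> E" using yF FE by auto
      have "card (stabilizer ?HH \<phi> z) = d" using mk key[OF yE] z by blast
      moreover have "z \<in> F"
      proof -
        obtain g where g: "g \<in> carrier G" "y = \<phi> g x0" using yF Fchar by auto
        obtain h where h: "h \<in> H" "z = \<phi> h y" using z orbH by auto
        have "z = \<phi> (h \<otimes> g) x0" using composition_rule x0 g h Hc by auto
        thus ?thesis using Fchar g h Hc by auto
      qed
      ultimately show "z \<in> Y" unfolding Y_def by auto
    qed
    have finQ: "finite Q" unfolding Q_def pts using finF by simp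
    have "card Y = (\<Sum>P\<in>Q. card P)" unfolding YU
    proof (rule card_Union_disjoint)
      show "pairwise disjnt Q" unfolding pairwise_def disjnt_def Q_def pts
        using orbsame FE by (smt (verit, ccfv_threshold) disjoint_iff image_iff mem_Collect_eq subsetD)
      show "\<And>P. P \<in> Q \<Longrightarrow> finite P" unfolding Q_def pts orbH using finH by auto
    qed
    hence "card Y * d = (\<Sum>P\<in>Q. card P * d)" by (simp add: sum_distrib_right)
    also have "\<dots> = (\<Sum>P\<in>Q. card H)"
    proof (rule sum.cong[OF refl])
      fix P assume "P \<in> Q"
      then obtain y where yF: "y \<in> F" and P: "P = orbit ?HH \<phi> y" and
        mk: "\<exists>w \<in> orbit ?HH \<phi> y. card (stabilizer ?HH \<phi> w) = d"
        unfolding Q_def pts marked_with_def by auto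
      have yE: "y \<in> E" using yF FE by auto
      show "card P * d = card H" using mk key[OF yE] P by blast
    qed
    finally show ?thesis by simp
  qed
  have r1: "real (card Y) * real d = real (card Q) * real (card H)" using s3 of_nat_mult by metis
  have r2: "real (card Y) * real (card Gj) = real (card N) * real (card T)" using s1 s2 of_nat_mult by metis
  have "real (card Q) = real (card T) * (real (card N) / real (card Gj)) * real d / real (card H)"
    using r1 r2 cardH cardGj by (simp add: field_simps) (metis mult.commute mult.left_commute)
  thus ?thesis unfolding Q_def T_def N_def d_def F_def by simp
qed

end

theorem proposition3p5:
  fixes G :: "('a, 'c) monoid_scheme" and S :: "'b set" and \<phi> :: "'a \<Rightarrow> 'b \<Rightarrow> 'b"
    and H Gj \<Omega> :: "'a set" and x0 :: 'b and lk :: 'a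
  assumes "group G" and "finite (carrier G)"
    and "faithful_action G S \<phi>"
    and "subgroup H G"
    and "x0 \<in> S"
    and "Gj = stabilizer G \<phi> x0"
    and "Gj \<noteq> {\<one>\<^bsub>G\<^esub>}"
    and "\<exists>g \<in> carrier G. Gj = generate G {g}"
    and "left_transversal G (normalizer G Gj) \<Omega>"
    and "lk \<in> \<Omega>"
  shows "real (card {P \<in> points_over G H \<phi> (orbit G \<phi> x0).
                 marked_with G H \<phi> P (card (conj_sub G lk Gj \<inter> H))})
       = real (card {l \<in> \<Omega>. card (conj_sub G l Gj \<inter> H) = card (conj_sub G lk Gj \<inter> H)})
         * (real (card (normalizer G Gj)) / real (card Gj))
         * real (card (conj_sub G lk Gj \<inter> H)) / real (card H)"
  proof -
  interpret faithful_action G S \<phi> by (rule assms(3))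
  show ?thesis using main assms by blast
qed

end
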